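(* There exist absolute constants $C_1,C_2>0$ such that the following holds. Let $P_*\in\mathcal N(n,K_*,L_* )$ be the true probability matrix, with parameters satisfying Assumptions A1 and A2, and let $A$ be generated from $P_*$ as in the network model. For $1\le L\le K\le n$ set $$\mathrm{Pen}(K,L)=C_1(nL+K^2)\ln n+C_2\, n\ln K .$$ Let $(\hat K,\hat L,\hat P)$ be a solution of $$(\hat K,\hat L,\hat P)\in\operatorname*{argmin}_{1\le L\le K\le n,\ P\in\mathcal N(n,K,L)}\Big\{\|A-P\|_F^2+\mathrm{Pen}(K,L)\Big\}.$$ Then for any $K,L$ with $1\le L\le K\le n$ and any $P\in\mathcal N(n,K,L)$, $$\mathbb P\Big\{\|\hat P-P_*\|_F^2\le 3\big[\|P-P_*\|_F^2+\mathrm{Pen}(K,L)\big]\Big\}\ge 1-(n^2\log_2 n+1)e^{-n/32},$$ and $$\mathbb E\|\hat P-P_*\|_F^2\le 3\big[\|P-P_*\|_F^2+\mathrm{Pen}(K,L)\big]+n^5e^{-n/32}.$$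
   Context: Network model: $n\ge 2$ nodes; $P_*\in[0,1]^{n\times n}$ is symmetric; $A\in\{0,1\}^{n\times n}$ is symmetric with entries $A_{ij}$, $1\le i\le j\le n$, independent, $A_{ij}\sim\mathrm{Bernoulli}((P_* )_{ij})$, and $A_{ji}=A_{ij}$. Nested Block Model class: for integers $1\le L\le K\le n$, $\mathcal N(n,K,L)$ is the set of matrices $P\in[0,1]^{n\times n}$ for which there exist a clustering function $z:\{1,\dots,n\}\to\{1,\dots,K\}$ (communities), a clustering function $c:\{1,\dots,K\}\to\{1,\dots,L\}$ (meta-communities), a matrix $B\in[0,1]^{K\times K}$ and a matrix $H\in\mathbb R_+^{n\times L}$ such that, with $n_k=\#\{i:z(i)=k\}$, $$\sum_{i:\,z(i)=k}H_{i,l}=n_k\quad\text{for all }k\le K,\ l\le L,$$ and $$P_{ij}=B_{z(i),z(j)}\,H_{i,c(z(j))}\,H_{j,c(z(i))}\quad\text{for all }i,j.$$ For such a representation, $h^{(k,l)}\in\mathbb R_+^{n_k}$ denotes the subvector $(H_{i,l})_{i:\,z(i)=k}$. Assumptions on the true matrix $P_*\in\mathcal N(n,K_*,L_* )$ with representation $(z_*,c_*,B,H)$: - A1: $B$ is nonsingular with smallest singular value at least $\lambda_0>0$. - A2: for each $k=1,\dots,K_*$, the vectors $h^{(k,l)}$, $l=1,\dots,L_*$, are linearly independent. *)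

theory Defs
  imports Complex_Main
begin

text \<open>Matrices are functions nat => nat => real; an n x n matrix uses the
indices 0..n-1 (node i of the paper is index i-1). Vectors are nat => real.
Clustering functions take values in 0..K-1 and 0..L-1.\<close>

definition frob2 :: "nat \<Rightarrow> (nat \<Rightarrow> nat \<Rightarrow> real) \<Rightarrow> (nat \<Rightarrow> nat \<Rightarrow> real) \<Rightarrow> real" where
  "frob2 n M N = (\<Sum>i<n. \<Sum>j<n. (M i j - N i j)^2)"

definition nbm_rep :: "nat \<Rightarrow> nat \<Rightarrow> nat \<Rightarrow> (nat \<Rightarrow> nat) \<Rightarrow> (nat \<Rightarrow> nat)
   \<Rightarrow> (nat \<Rightarrow> nat \<Rightarrow> real) \<Rightarrow> (nat \<Rightarrow> nat \<Rightarrow> real) \<Rightarrow> (nat \<Rightarrow> nat \<Rightarrow> real) \<Rightarrow> bool" where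
  "nbm_rep n K L z c B H P \<longleftrightarrow>
     (\<forall>i<n. \<forall>j<n. 0 \<le> P i j \<and> P i j \<le> 1) \<and>
     (\<forall>i<n. z i < K) \<and> (\<forall>k<K. c k < L) \<and>
     (\<forall>k<K. \<forall>k'<K. 0 \<le> B k k' \<and> B k k' \<le> 1) \<and>
     (\<forall>i<n. \<forall>l<L. 0 \<le> H i l) \<and>
     (\<forall>k<K. \<forall>l<L. (\<Sum>i\<in>{i. i < n \<and> z i = k}. H i l) = real (card {i. i < n \<and> z i = k})) \<and>
     (\<forall>i<n. \<forall>j<n. P i j = B (z i) (z j) * H i (c (z j)) * H j (c (z i)))"

definition NBM :: "nat \<Rightarrow> nat \<Rightarrow> nat \<Rightarrow> (nat \<Rightarrow> nat \<Rightarrow> real) set" where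
  "NBM n K L = {P. \<exists>z c B H. nbm_rep n K L z c B H P}"

definition smallest_singular_value :: "nat \<Rightarrow> (nat \<Rightarrow> nat \<Rightarrow> real) \<Rightarrow> real" where
  "smallest_singular_value K B =
     Inf {sqrt (\<Sum>k<K. (\<Sum>k'<K. B k k' * x k')^2) | x. (\<Sum>k<K. (x k)^2) = 1}"

definition nonsingular :: "nat \<Rightarrow> (nat \<Rightarrow> nat \<Rightarrow> real) \<Rightarrow> bool" where
  "nonsingular K B \<longleftrightarrow>
     (\<forall>x. (\<forall>k<K. (\<Sum>k'<K. B k k' * x k') = 0) \<longrightarrow> (\<forall>k<K. x k = 0))"

definition assumption_A1 :: "nat \<Rightarrow> (nat \<Rightarrow> nat \<Rightarrow> real) \<Rightarrow> real \<Rightarrow> bool" where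
  "assumption_A1 K B lambda0 \<longleftrightarrow>
     0 < lambda0 \<and> nonsingular K B \<and> smallest_singular_value K B \<ge> lambda0"

text \<open>Assumption A2: for each k, the vectors h^(k,l) = (H i l)_{z i = k}, l < L,
are linearly independent.\<close>
definition assumption_A2 :: "nat \<Rightarrow> nat \<Rightarrow> nat \<Rightarrow> (nat \<Rightarrow> nat) \<Rightarrow> (nat \<Rightarrow> nat \<Rightarrow> real) \<Rightarrow> bool" where
  "assumption_A2 n K L z H \<longleftrightarrow>
     (\<forall>k<K. \<forall>a :: nat \<Rightarrow> real.
        (\<forall>i<n. z i = k \<longrightarrow> (\<Sum>l<L. a l * H i l) = 0) \<longrightarrow> (\<forall>l<L. a l = 0))"

definition adj_set :: "nat \<Rightarrow> (nat \<Rightarrow> nat \<Rightarrow> real) set" where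
  "adj_set n = {A. (\<forall>i j. A i j = 0 \<or> A i j = 1) \<and> (\<forall>i j. A i j = A j i) \<and>
                   (\<forall>i j. n \<le> i \<or> n \<le> j \<longrightarrow> A i j = 0)}"

text \<open>Probability of adjacency matrix A: independent Bernoulli(P i j) entries, i <= j.\<close>
definition adj_weight :: "nat \<Rightarrow> (nat \<Rightarrow> nat \<Rightarrow> real) \<Rightarrow> (nat \<Rightarrow> nat \<Rightarrow> real) \<Rightarrow> real" where
  "adj_weight n P A = (\<Prod>i<n. \<Prod>j\<in>{i..<n}. if A i j = 1 then P i j else 1 - P i j)"

definition net_prob :: "nat \<Rightarrow> (nat \<Rightarrow> nat \<Rightarrow> real) \<Rightarrow> ((nat \<Rightarrow> nat \<Rightarrow> real) \<Rightarrow> bool) \<Rightarrow> real" where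
  "net_prob n P E = (\<Sum>A\<in>{A \<in> adj_set n. E A}. adj_weight n P A)"

definition net_expect :: "nat \<Rightarrow> (nat \<Rightarrow> nat \<Rightarrow> real) \<Rightarrow> ((nat \<Rightarrow> nat \<Rightarrow> real) \<Rightarrow> real) \<Rightarrow> real" where
  "net_expect n P f = (\<Sum>A\<in>adj_set n. adj_weight n P A * f A)"

definition Pen :: "real \<Rightarrow> real \<Rightarrow> nat \<Rightarrow> nat \<Rightarrow> nat \<Rightarrow> real" where
  "Pen C1 C2 n K L = C1 * (real n * real L + real K ^ 2) * ln (real n) + C2 * real n * ln (real K)"

definition is_pen_lse :: "real \<Rightarrow> real \<Rightarrow> nat \<Rightarrow>
    ((nat \<Rightarrow> nat \<Rightarrow> real) \<Rightarrow> nat \<times> nat \<times> (nat \<Rightarrow> nat \<Rightarrow> real)) \<Rightarrow> bool" where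
  "is_pen_lse C1 C2 n est \<longleftrightarrow>
     (\<forall>A\<in>adj_set n. case est A of (Kh, Lh, Ph) \<Rightarrow>
        1 \<le> Lh \<and> Lh \<le> Kh \<and> Kh \<le> n \<and> Ph \<in> NBM n Kh Lh \<and>
        (\<forall>K L P. 1 \<le> L \<and> L \<le> K \<and> K \<le> n \<and> P \<in> NBM n K L \<longrightarrow>
           frob2 n A Ph + Pen C1 C2 n Kh Lh \<le> frob2 n A P + Pen C1 C2 n K L))"

end

theory Submission
  imports Defs "HOL-Library.FuncSet"
begin

definition Prs :: "nat \<Rightarrow> (nat \<times> nat) set" where
  "Prs n = (SIGMA i:{..<n}. {i..<n})"

definition toA :: "nat \<Rightarrow> (nat \<times> nat \<Rightarrow> real) \<Rightarrow> nat \<Rightarrow> nat \<Rightarrow> real" where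
  "toA n g = (\<lambda>i j. if i < n \<and> j < n then (if i \<le> j then g (i,j) else g (j,i)) else 0)"

lemma finite_Prs[simp]: "finite (Prs n)" unfolding Prs_def by auto

lemma bij_adj: "bij_betw (\<lambda>A. restrict (\<lambda>p. A (fst p) (snd p)) (Prs n)) (adj_set n) (PiE (Prs n) (\<lambda>_. {0,1}))"
proof (rule bij_betw_byWitness[where f' = "toA n"])
  show "\<forall>a\<in>adj_set n. toA n (restrict (\<lambda>p. a (fst p) (snd p)) (Prs n)) = a"
  proof
    fix a assume a: "a \<in> adj_set n"
    show "toA n (restrict (\<lambda>p. a (fst p) (snd p)) (Prs n)) = a"
    proof (intro ext)
      fix i j
      show "toA n (restrict (\<lambda>p. a (fst p) (snd p)) (Prs n)) i j = a i j"
      proof -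
        have s: "a i j = a j i" and z: "n \<le> i \<or> n \<le> j \<longrightarrow> a i j = 0"
          using a unfolding adj_set_def by auto
        show ?thesis using s z unfolding toA_def Prs_def by auto
      qed
    qed
  qed
  show "\<forall>a'\<in>PiE (Prs n) (\<lambda>_. {0,1}). restrict (\<lambda>p. toA n a' (fst p) (snd p)) (Prs n) = a'"
  proof
    fix g assume g: "g \<in> PiE (Prs n) (\<lambda>_. {0::real,1})"
    show "restrict (\<lambda>p. toA n g (fst p) (snd p)) (Prs n) = g"
    proof (intro ext)
      fix p show "restrict (\<lambda>p. toA n g (fst p) (snd p)) (Prs n) p = g p"
        using g unfolding toA_def Prs_def by (cases p) (auto simp: PiE_def extensional_def)
    qed
  qed
  show "(\<lambda>A. restrict (\<lambda>p. A (fst p) (snd p)) (Prs n)) ` adj_set n \<subseteq> PiE (Prs n) (\<lambda>_. {0,1})"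
    unfolding adj_set_def by (auto simp: PiE_def Pi_def; metis)
  show "toA n ` PiE (Prs n) (\<lambda>_. {0,1}) \<subseteq> adj_set n"
  proof
    fix A assume "A \<in> toA n ` PiE (Prs n) (\<lambda>_. {0::real,1})"
    then obtain g where g: "g \<in> PiE (Prs n) (\<lambda>_. {0::real,1})" and A: "A = toA n g" by auto
    have "g (i,j) = 0 \<or> g (i,j) = 1" if "i \<le> j" "j < n" for i j
      using g that unfolding Prs_def by (auto simp: PiE_def Pi_def)
    then show "A \<in> adj_set n" unfolding A adj_set_def toA_def
      by (auto simp: not_le)
  qed
qed

lemma finite_adj[simp]: "finite (adj_set n)"
  using bij_betw_finite[OF bij_adj[of n]] by (auto intro!: finite_PiE)

lemma sum_adj_prod:
  fixes F :: "nat \<times> nat \<Rightarrow> real \<Rightarrow> real"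
  shows "(\<Sum>A\<in>adj_set n. \<Prod>p\<in>Prs n. F p (A (fst p) (snd p))) = (\<Prod>p\<in>Prs n. F p 0 + F p 1)"
proof -
  have "(\<Sum>A\<in>adj_set n. \<Prod>p\<in>Prs n. F p (A (fst p) (snd p)))
     = (\<Sum>A\<in>adj_set n. (\<lambda>g. \<Prod>p\<in>Prs n. F p (g p)) (restrict (\<lambda>p. A (fst p) (snd p)) (Prs n)))"
    by (intro sum.cong refl prod.cong) auto
  also have "\<dots> = (\<Sum>g\<in>PiE (Prs n) (\<lambda>_. {0,1}). \<Prod>p\<in>Prs n. F p (g p))"
    by (rule sum.reindex_bij_betw[OF bij_adj, where g = "\<lambda>g. \<Prod>p\<in>Prs n. F p (g p)"])
  also have "\<dots> = (\<Prod>p\<in>Prs n. \<Sum>y\<in>{0,1}. F p y)"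
    using prod_sum_PiE[of "Prs n" "\<lambda>_. {0,1}" F] by simp
  finally show ?thesis by simp
qed

lemma adj_weight_prod: "adj_weight n P A = (\<Prod>p\<in>Prs n. if A (fst p) (snd p) = 1 then P (fst p) (snd p) else 1 - P (fst p) (snd p))"
  unfolding adj_weight_def Prs_def by (simp add: prod.Sigma split_def)

lemma sum_Prs: "(\<Sum>i<n. \<Sum>j<n. g i j) = (\<Sum>p\<in>Prs n. if fst p = snd p then g (fst p) (fst p) else g (fst p) (snd p) + g (snd p) (fst p))"
proof -
  have "(\<Sum>i<n. \<Sum>j<n. g i j) = (\<Sum>i<n. \<Sum>j\<in>{i..<n}. if i = j then g i i else g i j + g j i)"
  proof (induction n)
    case 0 then show ?case by simp
  next
    case (Suc n)
    have "(\<Sum>i<Suc n. \<Sum>j<Suc n. g i j) = (\<Sum>i<n. \<Sum>j<n. g i j) + (\<Sum>i<n. g i n) + (\<Sum>j<n. g n j) + g n n"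
      by (simp add: sum.distrib algebra_simps)
    also have "\<dots> = (\<Sum>i<n. \<Sum>j\<in>{i..<n}. if i = j then g i i else g i j + g j i) + (\<Sum>i<n. g i n + g n i) + g n n"
      using Suc by (simp add: sum.distrib algebra_simps)
    also have "\<dots> = (\<Sum>i<Suc n. \<Sum>j\<in>{i..<Suc n}. if i = j then g i i else g i j + g j i)"
      by (simp add: sum.distrib algebra_simps)
    finally show ?case .
  qed
  also have "\<dots> = (\<Sum>p\<in>Prs n. if fst p = snd p then g (fst p) (fst p) else g (fst p) (snd p) + g (snd p) (fst p))"
    unfolding Prs_def by (simp add: sum.Sigma split_def)
  finally show ?thesis .
qed

lemma exp_le_quad: fixes y :: real assumes "\<bar>y\<bar> \<le> 1" shows "exp y \<le> 1 + y + y^2"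
proof (cases "y \<ge> 0")
  case True then show ?thesis using exp_bound[of y] assms by simp
next
  case False
  have "1 - y \<le> exp (-y)" using exp_ge_add_one_self[of "-y"] by simp
  hence "exp y \<le> 1 / (1 - y)" using False by (simp add: exp_minus field_simps)
  also have "\<dots> \<le> 1 + y + y^2"
  proof -
    have e: "(1 - y) * (1 + y + y^2) = 1 - y * y^2" by (simp add: algebra_simps power2_eq_square)
    have "y * y^2 \<le> 0" using False by (simp add: mult_nonpos_nonneg)
    hence "1 \<le> (1 - y) * (1 + y + y^2)" unfolding e by simp
    then show ?thesis using False by (simp add: field_simps)
  qed
  finally show ?thesis .
qed

lemma bern_mgf: fixes p u :: real assumes "0 \<le> p" "p \<le> 1" "\<bar>u\<bar> \<le> 1"
  shows "(1 - p) * exp (u * (0 - p)) + p * exp (u * (1 - p)) \<le> exp (u^2)"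
proof -
  have a1: "\<bar>u * (0 - p)\<bar> \<le> 1"
  proof -
    have "\<bar>u * (0 - p)\<bar> = \<bar>u\<bar> * p" using assms by (simp add: abs_mult)
    also have "\<dots> \<le> 1 * 1" using assms by (intro mult_mono) auto
    finally show ?thesis by simp
  qed
  have a2: "\<bar>u * (1 - p)\<bar> \<le> 1"
  proof -
    have "\<bar>u * (1 - p)\<bar> = \<bar>u\<bar> * (1 - p)" using assms by (simp add: abs_mult)
    also have "\<dots> \<le> 1 * 1" using assms by (intro mult_mono) auto
    finally show ?thesis by simp
  qed
  have "(1 - p) * exp (u * (0 - p)) + p * exp (u * (1 - p))
     \<le> (1 - p) * (1 + u * (0 - p) + (u * (0 - p))^2) + p * (1 + u * (1 - p) + (u * (1 - p))^2)"
    using exp_le_quad[OF a1] exp_le_quad[OF a2] assms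
    by (intro add_mono mult_left_mono) auto
  also have "\<dots> = 1 + u^2 * (p * (1 - p))" by (simp add: algebra_simps power2_eq_square)
  also have "\<dots> \<le> 1 + u^2"
  proof -
    have "p * (1 - p) \<le> 1 * 1" using assms by (intro mult_mono) auto
    then show ?thesis by (simp add: mult_left_le)
  qed
  also have "\<dots> \<le> exp (u^2)" using exp_ge_add_one_self[of "u^2"] by simp
  finally show ?thesis .
qed


definition ipW :: "nat \<Rightarrow> (nat \<Rightarrow> nat \<Rightarrow> real) \<Rightarrow> (nat \<Rightarrow> nat \<Rightarrow> real) \<Rightarrow> (nat \<Rightarrow> nat \<Rightarrow> real) \<Rightarrow> real" where
  "ipW n P A D = (\<Sum>i<n. \<Sum>j<n. (A i j - P i j) * D i j)"

definition cc :: "(nat \<Rightarrow> nat \<Rightarrow> real) \<Rightarrow> nat \<times> nat \<Rightarrow> real" where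
  "cc D p = (if fst p = snd p then D (fst p) (fst p) else D (fst p) (snd p) + D (snd p) (fst p))"

lemma ipW_Prs: assumes "A \<in> adj_set n" "\<forall>i j. P i j = P j i"
  shows "ipW n P A D = (\<Sum>p\<in>Prs n. (A (fst p) (snd p) - P (fst p) (snd p)) * cc D p)"
proof -
  have sA: "A i j = A j i" for i j using assms(1) unfolding adj_set_def by auto
  show ?thesis unfolding ipW_def sum_Prs cc_def
    by (intro sum.cong refl) (auto simp: algebra_simps sA assms(2)[rule_format, of "snd _" "fst _"])
qed

lemma weight_nonneg: assumes "\<forall>i<n. \<forall>j<n. 0 \<le> P i j \<and> P i j \<le> 1"
  shows "0 \<le> adj_weight n P A"
  unfolding adj_weight_def using assms by (intro prod_nonneg) auto

lemma total_weight: assumes "\<forall>i<n. \<forall>j<n. 0 \<le> P i j \<and> P i j \<le> 1"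
  shows "(\<Sum>A\<in>adj_set n. adj_weight n P A) = 1"
proof -
  define F where "F = (\<lambda>p (y::real). if y = 1 then P (fst p) (snd p) else 1 - P (fst p) (snd p))"
  have "(\<Sum>A\<in>adj_set n. adj_weight n P A) = (\<Sum>A\<in>adj_set n. \<Prod>p\<in>Prs n. F p (A (fst p) (snd p)))"
    by (simp add: adj_weight_prod F_def)
  also have "\<dots> = (\<Prod>p\<in>Prs n. F p 0 + F p 1)" by (rule sum_adj_prod)
  also have "\<dots> = 1" unfolding F_def by simp
  finally show ?thesis .
qed

lemma mgf_bound:
  assumes P01: "\<forall>i<n. \<forall>j<n. 0 \<le> P i j \<and> P i j \<le> 1" and sym: "\<forall>i j. P i j = P j i"
    and tc: "\<forall>p\<in>Prs n. \<bar>t * cc D p\<bar> \<le> 1"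
  shows "net_expect n P (\<lambda>A. exp (t * ipW n P A D)) \<le> exp (t^2 * (\<Sum>p\<in>Prs n. (cc D p)^2))"
proof -
  define F where "F = (\<lambda>p y. (if y = 1 then P (fst p) (snd p) else 1 - P (fst p) (snd p)) * exp (t * ((y - P (fst p) (snd p)) * cc D p)))"
  have "net_expect n P (\<lambda>A. exp (t * ipW n P A D)) = (\<Sum>A\<in>adj_set n. \<Prod>p\<in>Prs n. F p (A (fst p) (snd p)))"
    unfolding net_expect_def
  proof (intro sum.cong refl)
    fix A assume A: "A \<in> adj_set n"
    have "exp (t * ipW n P A D) = (\<Prod>p\<in>Prs n. exp (t * ((A (fst p) (snd p) - P (fst p) (snd p)) * cc D p)))"
      unfolding ipW_Prs[OF A sym] sum_distrib_left exp_sum[OF finite_Prs] ..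
    then show "adj_weight n P A * exp (t * ipW n P A D) = (\<Prod>p\<in>Prs n. F p (A (fst p) (snd p)))"
      unfolding adj_weight_prod F_def prod.distrib by simp
  qed
  also have "\<dots> = (\<Prod>p\<in>Prs n. F p 0 + F p 1)" by (rule sum_adj_prod)
  also have "\<dots> \<le> (\<Prod>p\<in>Prs n. exp ((t * cc D p)^2))"
  proof (rule prod_mono, rule conjI)
    fix p assume p: "p \<in> Prs n"
    have pp: "0 \<le> P (fst p) (snd p)" "P (fst p) (snd p) \<le> 1" using p P01 unfolding Prs_def by auto
    have "F p 0 + F p 1 = (1 - P (fst p) (snd p)) * exp ((t * cc D p) * (0 - P (fst p) (snd p))) + P (fst p) (snd p) * exp ((t * cc D p) * (1 - P (fst p) (snd p)))"
      unfolding F_def by (simp add: algebra_simps)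
    also have "\<dots> \<le> exp ((t * cc D p)^2)" by (rule bern_mgf[OF pp]) (use tc p in auto)
    finally show "F p 0 + F p 1 \<le> exp ((t * cc D p)^2)" .
    show "0 \<le> F p 0 + F p 1" unfolding F_def using pp by auto
  qed
  also have "\<dots> = exp (t^2 * (\<Sum>p\<in>Prs n. (cc D p)^2))"
    by (simp add: exp_sum[symmetric] sum_distrib_left power_mult_distrib)
  finally show ?thesis .
qed

lemma markov:
  assumes P01: "\<forall>i<n. \<forall>j<n. 0 \<le> P i j \<and> P i j \<le> 1" and t: "0 \<le> t"
  shows "net_prob n P (\<lambda>A. s \<le> f A) \<le> exp (- t * s) * net_expect n P (\<lambda>A. exp (t * f A))"
proof -
  have "net_prob n P (\<lambda>A. s \<le> f A) \<le> (\<Sum>A\<in>{A \<in> adj_set n. s \<le> f A}. adj_weight n P A * exp (t * (f A - s)))"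
    unfolding net_prob_def
  proof (rule sum_mono)
    fix A assume "A \<in> {A \<in> adj_set n. s \<le> f A}"
    then have "1 \<le> exp (t * (f A - s))" using t by simp
    then have "adj_weight n P A * 1 \<le> adj_weight n P A * exp (t * (f A - s))"
      using weight_nonneg[OF P01] by (intro mult_left_mono) auto
    then show "adj_weight n P A \<le> adj_weight n P A * exp (t * (f A - s))" by simp
  qed
  also have "\<dots> \<le> (\<Sum>A\<in>adj_set n. adj_weight n P A * exp (t * (f A - s)))"
    by (rule sum_mono2) (auto intro!: mult_nonneg_nonneg weight_nonneg[OF P01])
  also have "\<dots> = exp (- t * s) * net_expect n P (\<lambda>A. exp (t * f A))"
    unfolding net_expect_def sum_distrib_left
    by (intro sum.cong refl) (simp add: exp_diff exp_minus divide_inverse mult_exp_exp[symmetric] algebra_simps)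
  finally show ?thesis .
qed


lemma cc_sq: "(\<Sum>p\<in>Prs n. (cc D p)^2) \<le> 2 * (\<Sum>i<n. \<Sum>j<n. (D i j)^2)"
proof -
  have "(\<Sum>p\<in>Prs n. (cc D p)^2) \<le> (\<Sum>p\<in>Prs n. 2 * (if fst p = snd p then (D (fst p) (fst p))^2 else (D (fst p) (snd p))^2 + (D (snd p) (fst p))^2))"
  proof (rule sum_mono)
    fix p
    have "(a + b)^2 \<le> 2 * (a^2 + b^2)" for a b :: real
    proof -
      have "0 \<le> (a - b)^2" by simp
      then show ?thesis by (simp add: power2_eq_square algebra_simps)
    qed
    then show "(cc D p)^2 \<le> 2 * (if fst p = snd p then (D (fst p) (fst p))^2 else (D (fst p) (snd p))^2 + (D (snd p) (fst p))^2)"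
      unfolding cc_def by auto
  qed
  also have "\<dots> = 2 * (\<Sum>i<n. \<Sum>j<n. (D i j)^2)"
    unfolding sum_Prs[of "\<lambda>i j. (D i j)^2"] sum_distrib_left ..
  finally show ?thesis .
qed

lemma tail:
  assumes P01: "\<forall>i<n. \<forall>j<n. 0 \<le> P i j \<and> P i j \<le> 1" and sym: "\<forall>i j. P i j = P j i"
    and Db: "\<forall>i<n. \<forall>j<n. \<bar>D i j\<bar> \<le> 1"
  shows "net_prob n P (\<lambda>A. (\<Sum>i<n. \<Sum>j<n. (D i j)^2) / 16 + x \<le> ipW n P A D) \<le> exp (- x / 32)"
proof -
  define N where "N = (\<Sum>i<n. \<Sum>j<n. (D i j)^2)"
  define t :: real where "t = 1/32"
  have tc: "\<forall>p\<in>Prs n. \<bar>t * cc D p\<bar> \<le> 1"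
  proof
    fix p assume p: "p \<in> Prs n"
    then have "fst p < n" "snd p < n" unfolding Prs_def by auto
    then have b1: "\<bar>D (fst p) (snd p)\<bar> \<le> 1" "\<bar>D (snd p) (fst p)\<bar> \<le> 1" "\<bar>D (fst p) (fst p)\<bar> \<le> 1"
      using Db by auto
    then have "\<bar>cc D p\<bar> \<le> 2" unfolding cc_def by auto
    then show "\<bar>t * cc D p\<bar> \<le> 1" unfolding t_def by (simp add: abs_mult)
  qed
  have "net_prob n P (\<lambda>A. N / 16 + x \<le> ipW n P A D) \<le> exp (- t * (N/16 + x)) * net_expect n P (\<lambda>A. exp (t * ipW n P A D))"
    by (rule markov[OF P01]) (simp add: t_def)
  also have "\<dots> \<le> exp (- t * (N/16 + x)) * exp (t^2 * (\<Sum>p\<in>Prs n. (cc D p)^2))"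
    by (intro mult_left_mono mgf_bound[OF P01 sym tc]) auto
  also have "\<dots> \<le> exp (- t * (N/16 + x)) * exp (t^2 * (2 * N))"
    unfolding N_def by (intro mult_left_mono) (auto intro: mult_left_mono cc_sq)
  also have "\<dots> = exp (- x / 32)"
    unfolding mult_exp_exp t_def by (simp add: algebra_simps power2_eq_square)
  finally show ?thesis unfolding N_def .
qed


definition mkM :: "nat \<Rightarrow> nat \<Rightarrow> (nat \<Rightarrow> nat) \<Rightarrow> (nat \<Rightarrow> nat) \<Rightarrow> (nat \<times> nat \<Rightarrow> nat) \<Rightarrow> (nat \<times> nat \<Rightarrow> nat) \<Rightarrow> nat \<Rightarrow> nat \<Rightarrow> real" where
  "mkM n m z c b h = (\<lambda>i j. if i < n \<and> j < n then (real (b (z i, z j)) / m) * (real (h (i, c (z j))) / m) * (real (h (j, c (z i))) / m) else 0)"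

definition ParS :: "nat \<Rightarrow> nat \<Rightarrow> nat \<Rightarrow> ((nat \<Rightarrow> nat) \<times> (nat \<Rightarrow> nat) \<times> (nat \<times> nat \<Rightarrow> nat) \<times> (nat \<times> nat \<Rightarrow> nat)) set" where
  "ParS n K L = PiE {..<n} (\<lambda>_. {..<K}) \<times> PiE {..<K} (\<lambda>_. {..<L}) \<times> PiE ({..<K}\<times>{..<K}) (\<lambda>_. {..n^4}) \<times> PiE ({..<n}\<times>{..<L}) (\<lambda>_. {..n*n^4})"

definition NetS :: "nat \<Rightarrow> nat \<Rightarrow> nat \<Rightarrow> (nat \<Rightarrow> nat \<Rightarrow> real) set" where
  "NetS n K L = {M \<in> (\<lambda>(z,c,b,h). mkM n (n^4) z c b h) ` ParS n K L. \<forall>i<n. \<forall>j<n. 0 \<le> M i j \<and> M i j \<le> 1}"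

lemma finite_ParS: "finite (ParS n K L)" unfolding ParS_def by (intro finite_cartesian_product finite_PiE) auto

lemma finite_NetS: "finite (NetS n K L)" unfolding NetS_def using finite_ParS by auto

lemma card_ParS: "card (ParS n K L) = K^n * L^K * (n^4+1)^(K*K) * (n*n^4+1)^(n*L)"
  unfolding ParS_def by (simp add: card_cartesian_product card_PiE)

lemma card_NetS_nat: assumes "2 \<le> n" "1 \<le> L" "L \<le> n" "K \<le> n"
  shows "card (NetS n K L) \<le> n^(8*(n*L+K^2))"
proof -
  have "card (NetS n K L) \<le> card ((\<lambda>(z,c,b,h). mkM n (n^4) z c b h) ` ParS n K L)"
    unfolding NetS_def by (intro card_mono finite_imageI finite_ParS) auto
  also have "\<dots> \<le> card (ParS n K L)" by (rule card_image_le[OF finite_ParS])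
  also have "\<dots> = K^n * L^K * (n^4+1)^(K*K) * (n*n^4+1)^(n*L)" by (rule card_ParS)
  also have "\<dots> \<le> n^n * n^n * (n^5)^(K*K) * (n^6)^(n*L)"
  proof (intro mult_mono power_mono)
    have "n^4 < n^5" using assms by (intro power_strict_increasing) auto
    then show "n^4 + 1 \<le> n^5" by simp
    have "n^5 < n^6" using assms by (intro power_strict_increasing) auto
    moreover have "n*n^4 = n^5" by (simp add: power_Suc[symmetric] del: power_Suc)
    ultimately show "n*n^4 + 1 \<le> n^6" by simp
    have "L^K \<le> n^K" using assms by (intro power_mono) auto
    also have "\<dots> \<le> n^n" using assms by (intro power_increasing) auto
    finally show "L^K \<le> n^n" .
  qed (use assms in auto)
  also have "\<dots> = n^(2*n + 5*K^2 + 6*(n*L))"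
  proof -
    have "n^n*n^n = n^(n*2)" by (simp only: power_add[symmetric] mult_2_right)
    then show ?thesis by (simp add: power_add power_mult[symmetric] power2_eq_square algebra_simps)
  qed
  also have "\<dots> \<le> n^(8*(n*L+K^2))"
  proof (intro power_increasing)
    have "n \<le> n*L" using assms by simp
    then show "2*n + 5*K^2 + 6*(n*L) \<le> 8*(n*L+K^2)" unfolding distrib_left by linarith
  qed (use assms in auto)
  finally show ?thesis .
qed

lemma card_NetS: assumes "2 \<le> n" "1 \<le> L" "L \<le> n" "K \<le> n"
  shows "real (card (NetS n K L)) \<le> exp (8 * (real n * real L + real K ^ 2) * ln (real n))"
proof -
  have "real (card (NetS n K L)) \<le> real (n^(8*(n*L+K^2)))"
    using card_NetS_nat[OF assms] by linarith
  also have "\<dots> = exp (8 * (real n * real L + real K ^ 2) * ln (real n))"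
  proof -
    have "real (n^(8*(n*L+K^2))) = real n powr real (8*(n*L+K^2))"
      using assms by (subst powr_realpow) auto
    also have "\<dots> = exp (8 * (real n * real L + real K ^ 2) * ln (real n))"
      using assms unfolding powr_def by (simp add: algebra_simps)
    finally show ?thesis .
  qed
  finally show ?thesis .
qed


definition rnd :: "nat \<Rightarrow> real \<Rightarrow> real" where
  "rnd m x = real (nat \<lfloor>x * real m\<rfloor>) / real m"

lemma rnd_props: assumes "0 \<le> x" "0 < m"
  shows "0 \<le> rnd m x" "rnd m x \<le> x" "x - rnd m x \<le> 1 / real m"
proof -
  have f: "real (nat \<lfloor>x * real m\<rfloor>) = of_int \<lfloor>x * real m\<rfloor>" using assms by simp
  have a: "of_int \<lfloor>x * real m\<rfloor> \<le> x * real m" by (rule of_int_floor_le)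
  have b: "x * real m < of_int \<lfloor>x * real m\<rfloor> + 1" by (rule real_of_int_floor_add_one_gt)
  show "0 \<le> rnd m x" unfolding rnd_def by simp
  show "rnd m x \<le> x" unfolding rnd_def f using a assms by (simp add: field_simps)
  have "(x * real m - 1) / real m \<le> of_int \<lfloor>x * real m\<rfloor> / real m"
    by (rule divide_right_mono) (use b in auto)
  moreover have "(x * real m - 1) / real m = x - 1 / real m" using assms by (simp add: field_simps)
  ultimately show "x - rnd m x \<le> 1 / real m" unfolding rnd_def f by linarith
qed

lemma rnd_nat_le: assumes "0 \<le> x" "x \<le> real U"
  shows "nat \<lfloor>x * real m\<rfloor> \<le> U * m"
proof -
  have "x * real m \<le> real U * real m" using assms by (intro mult_right_mono) auto
  then have "\<lfloor>x * real m\<rfloor> \<le> int (U * m)" by (simp add: floor_le_iff)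
  then show ?thesis by (metis nat_le_iff of_nat_mult)
qed

lemma prod_err:
  fixes a a' b b' c c' e N :: real
  assumes "0 \<le> a'" "a' \<le> a" "a \<le> 1" "0 \<le> b'" "b' \<le> b" "b \<le> N" "0 \<le> c'" "c' \<le> c" "c \<le> N"
    "a - a' \<le> e" "b - b' \<le> e" "c - c' \<le> e" "1 \<le> N"
  shows "a' * b' * c' \<le> a * b * c" "a * b * c - a' * b' * c' \<le> 3 * N^2 * e"
proof -
  have e: "a * b * c - a' * b' * c' = (a - a') * b * c + a' * (b - b') * c + a' * b' * (c - c')"
    by (simp add: algebra_simps)
  have t1: "0 \<le> (a - a') * b * c" "(a - a') * b * c \<le> e * N * N"
    using assms by (auto intro!: mult_mono mult_nonneg_nonneg)
  have ep: "0 \<le> e" using assms by linarith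
  have u2: "a' * (b - b') \<le> 1 * e" by (rule mult_mono) (use assms in auto)
  have t2a: "a' * (b - b') * c \<le> (1 * e) * N" by (rule mult_mono[OF u2]) (use assms ep in auto)
  have t2: "0 \<le> a' * (b - b') * c" "a' * (b - b') * c \<le> 1 * e * N"
    using assms t2a by (auto intro!: mult_nonneg_nonneg)
  have u3: "a' * b' \<le> 1 * N" by (rule mult_mono) (use assms in auto)
  have t3a: "a' * b' * (c - c') \<le> (1 * N) * e" by (rule mult_mono[OF u3]) (use assms ep in auto)
  have t3: "0 \<le> a' * b' * (c - c')" "a' * b' * (c - c') \<le> 1 * N * e"
    using assms t3a by (auto intro!: mult_nonneg_nonneg)
  have "(e * N) * 1 \<le> (e * N) * N" using assms ep by (intro mult_left_mono) auto
  then show "a * b * c - a' * b' * c' \<le> 3 * N^2 * e" unfolding e using t1 t2 t3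
    by (simp add: power2_eq_square algebra_simps)
  show "a' * b' * c' \<le> a * b * c" using e t1 t2 t3 by linarith
qed

lemma H_le_n: assumes "nbm_rep n K L z c B H P" "i < n" "l < L"
  shows "H i l \<le> real n"
proof -
  let ?S = "{i'. i' < n \<and> z i' = z i}"
  have fin: "finite ?S" by auto
  have zi: "z i < K" using assms unfolding nbm_rep_def by auto
  have "H i l \<le> (\<Sum>i'\<in>?S. H i' l)"
    by (rule member_le_sum) (use assms in \<open>auto simp: nbm_rep_def\<close>)
  also have "\<dots> = real (card ?S)" using assms zi unfolding nbm_rep_def by auto
  also have "\<dots> \<le> real n"
  proof -
    have "card ?S \<le> card {..<n}" by (intro card_mono) auto
    then show ?thesis by simp
  qed
  finally show ?thesis .
qed

lemma approx_net: assumes n: "2 \<le> n" and Q: "Q \<in> NBM n K L"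
  shows "\<exists>M\<in>NetS n K L. \<forall>i<n. \<forall>j<n. \<bar>M i j - Q i j\<bar> \<le> 3 / real n ^ 2"
proof -
  obtain z c B H where rep: "nbm_rep n K L z c B H Q" using Q unfolding NBM_def by auto
  define m where "m = n^4"
  have m0: "0 < m" using n unfolding m_def by simp
  define zz where "zz = restrict z {..<n}"
  define cz where "cz = restrict c {..<K}"
  define bb where "bb = restrict (\<lambda>(k,k'). nat \<lfloor>B k k' * real m\<rfloor>) ({..<K}\<times>{..<K})"
  define hh where "hh = restrict (\<lambda>(i,l). nat \<lfloor>H i l * real m\<rfloor>) ({..<n}\<times>{..<L})"
  define M where "M = mkM n m zz cz bb hh"
  have zK: "\<And>i. i < n \<Longrightarrow> z i < K" and cL: "\<And>k. k < K \<Longrightarrow> c k < L"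
    and B01: "\<And>k k'. k < K \<Longrightarrow> k' < K \<Longrightarrow> 0 \<le> B k k' \<and> B k k' \<le> 1"
    and H0: "\<And>i l. i < n \<Longrightarrow> l < L \<Longrightarrow> 0 \<le> H i l"
    and Qeq: "\<And>i j. i < n \<Longrightarrow> j < n \<Longrightarrow> Q i j = B (z i) (z j) * H i (c (z j)) * H j (c (z i))"
    and Q01: "\<And>i j. i < n \<Longrightarrow> j < n \<Longrightarrow> 0 \<le> Q i j \<and> Q i j \<le> 1"
    using rep unfolding nbm_rep_def by auto
  have Hn: "\<And>i l. i < n \<Longrightarrow> l < L \<Longrightarrow> H i l \<le> real n" using H_le_n[OF rep] by auto
  have par: "(zz, cz, bb, hh) \<in> ParS n K L"
    unfolding ParS_def zz_def cz_def bb_def hh_def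
  proof (intro SigmaI PiE_I)
    show "\<And>x. x \<in> {..<n} \<Longrightarrow> restrict z {..<n} x \<in> {..<K}" using zK by auto
    show "\<And>x. x \<in> {..<K} \<Longrightarrow> restrict c {..<K} x \<in> {..<L}" using cL by auto
    show "\<And>x. x \<in> {..<K} \<times> {..<K} \<Longrightarrow> restrict (\<lambda>(k,k'). nat \<lfloor>B k k' * real m\<rfloor>) ({..<K}\<times>{..<K}) x \<in> {..n^4}"
    proof -
      fix x assume x: "x \<in> {..<K} \<times> {..<K}"
      then obtain k k' where "x = (k,k')" "k < K" "k' < K" by auto
      then show "restrict (\<lambda>(k,k'). nat \<lfloor>B k k' * real m\<rfloor>) ({..<K}\<times>{..<K}) x \<in> {..n^4}"
        using rnd_nat_le[of "B k k'" 1 m] B01 unfolding m_def by auto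
    qed
    show "\<And>x. x \<in> {..<n} \<times> {..<L} \<Longrightarrow> restrict (\<lambda>(i,l). nat \<lfloor>H i l * real m\<rfloor>) ({..<n}\<times>{..<L}) x \<in> {..n*n^4}"
    proof -
      fix x assume x: "x \<in> {..<n} \<times> {..<L}"
      then obtain i l where "x = (i,l)" "i < n" "l < L" by auto
      then show "restrict (\<lambda>(i,l). nat \<lfloor>H i l * real m\<rfloor>) ({..<n}\<times>{..<L}) x \<in> {..n*n^4}"
        using rnd_nat_le[of "H i l" n m] H0 Hn unfolding m_def by auto
    qed
  qed auto
  have Mij: "M i j = rnd m (B (z i) (z j)) * rnd m (H i (c (z j))) * rnd m (H j (c (z i)))"
    if "i < n" "j < n" for i j
    using that zK cL unfolding M_def mkM_def zz_def cz_def bb_def hh_def rnd_def by auto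
  have err: "0 \<le> M i j \<and> M i j \<le> Q i j \<and> Q i j - M i j \<le> 3 * real n ^ 2 * (1 / real m)"
    if ij: "i < n" "j < n" for i j
  proof -
    have bz: "0 \<le> B (z i) (z j)" "B (z i) (z j) \<le> 1" using B01 zK ij by auto
    have h1: "0 \<le> H i (c (z j))" "H i (c (z j)) \<le> real n" using H0 Hn cL zK ij by auto
    have h2: "0 \<le> H j (c (z i))" "H j (c (z i)) \<le> real n" using H0 Hn cL zK ij by auto
    note r1 = rnd_props[OF bz(1) m0] and r2 = rnd_props[OF h1(1) m0] and r3 = rnd_props[OF h2(1) m0]
    have "1 \<le> real n" using n by simp
    note pe = prod_err[OF r1(1) r1(2) bz(2) r2(1) r2(2) h1(2) r3(1) r3(2) h2(2) r1(3) r2(3) r3(3) this]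
    show ?thesis unfolding Mij[OF ij] Qeq[OF ij] using pe r1(1) r2(1) r3(1) by auto
  qed
  have "M \<in> NetS n K L"
    unfolding NetS_def
  proof (intro CollectI conjI allI impI)
    show "M \<in> (\<lambda>(z,c,b,h). mkM n (n^4) z c b h) ` ParS n K L"
      using par unfolding M_def m_def by force
    fix i j assume "i < n" "j < n"
    then show "0 \<le> M i j" "M i j \<le> 1" using err[of i j] Q01[of i j] by linarith+
  qed
  moreover have "\<forall>i<n. \<forall>j<n. \<bar>M i j - Q i j\<bar> \<le> 3 / real n ^ 2"
  proof (intro allI impI)
    fix i j assume ij: "i < n" "j < n"
    have "3 * real n ^ 2 * (1 / real m) = 3 / real n ^ 2"
      using n unfolding m_def by (simp add: field_simps power2_eq_square eval_nat_numeral)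
    then show "\<bar>M i j - Q i j\<bar> \<le> 3 / real n ^ 2" using err[OF ij] by auto
  qed
  ultimately show ?thesis by blast
qed


lemma prob_mono: assumes P01: "\<forall>i<n. \<forall>j<n. 0 \<le> P i j \<and> P i j \<le> 1"
  and "\<forall>A\<in>adj_set n. E A \<longrightarrow> F A"
  shows "net_prob n P E \<le> net_prob n P F"
  unfolding net_prob_def using assms(2)
  by (intro sum_mono2) (auto intro: weight_nonneg[OF P01])

lemma prob_nonneg: assumes P01: "\<forall>i<n. \<forall>j<n. 0 \<le> P i j \<and> P i j \<le> 1"
  shows "0 \<le> net_prob n P E"
  unfolding net_prob_def by (intro sum_nonneg weight_nonneg[OF P01])

lemma prob_or: assumes P01: "\<forall>i<n. \<forall>j<n. 0 \<le> P i j \<and> P i j \<le> 1"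
  shows "net_prob n P (\<lambda>A. E A \<or> F A) \<le> net_prob n P E + net_prob n P F"
proof -
  have eq: "{A \<in> adj_set n. E A \<or> F A} = {A \<in> adj_set n. E A} \<union> {A \<in> adj_set n. F A}" by auto
  have "net_prob n P (\<lambda>A. E A \<or> F A) + (\<Sum>A\<in>{A \<in> adj_set n. E A} \<inter> {A \<in> adj_set n. F A}. adj_weight n P A)
      = net_prob n P E + net_prob n P F"
    unfolding net_prob_def eq by (rule sum.union_inter) auto
  moreover have "0 \<le> (\<Sum>A\<in>{A \<in> adj_set n. E A} \<inter> {A \<in> adj_set n. F A}. adj_weight n P A)"
    by (intro sum_nonneg weight_nonneg[OF P01])
  ultimately show ?thesis by linarith
qed

lemma prob_ex: assumes P01: "\<forall>i<n. \<forall>j<n. 0 \<le> P i j \<and> P i j \<le> 1" and fin: "finite I"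
  shows "net_prob n P (\<lambda>A. \<exists>k\<in>I. E k A) \<le> (\<Sum>k\<in>I. net_prob n P (E k))"
  using fin
proof (induction I rule: finite_induct)
  case empty
  then show ?case unfolding net_prob_def by simp
next
  case (insert a I)
  have "net_prob n P (\<lambda>A. \<exists>k\<in>insert a I. E k A) = net_prob n P (\<lambda>A. E a A \<or> (\<exists>k\<in>I. E k A))"
    by simp
  also have "\<dots> \<le> net_prob n P (E a) + net_prob n P (\<lambda>A. \<exists>k\<in>I. E k A)" by (rule prob_or[OF P01])
  also have "\<dots> \<le> net_prob n P (E a) + (\<Sum>k\<in>I. net_prob n P (E k))" using insert by simp
  finally show ?case using insert by simp
qed

lemma prob_compl: assumes P01: "\<forall>i<n. \<forall>j<n. 0 \<le> P i j \<and> P i j \<le> 1"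
  shows "net_prob n P (\<lambda>A. \<not> E A) = 1 - net_prob n P E"
proof -
  have "(\<Sum>A\<in>adj_set n. adj_weight n P A) = net_prob n P (\<lambda>A. \<not> E A) + net_prob n P E"
    unfolding net_prob_def by (subst sum.union_disjoint[symmetric]) (auto intro!: sum.cong)
  then show ?thesis using total_weight[OF P01] by linarith
qed

lemma expect_bound: assumes P01: "\<forall>i<n. \<forall>j<n. 0 \<le> P i j \<and> P i j \<le> 1"
  and "\<forall>A\<in>adj_set n. f A \<le> R + c * (if E A then 1 else 0)"
  shows "net_expect n P f \<le> R + c * net_prob n P E"
proof -
  have "net_expect n P f \<le> (\<Sum>A\<in>adj_set n. adj_weight n P A * (R + c * (if E A then 1 else 0)))"
    unfolding net_expect_def using assms(2) by (intro sum_mono mult_left_mono weight_nonneg[OF P01]) auto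
  also have "\<dots> = R * (\<Sum>A\<in>adj_set n. adj_weight n P A) + c * (\<Sum>A\<in>adj_set n. if E A then adj_weight n P A else 0)"
  proof -
    have "\<And>A. adj_weight n P A * (R + c * (if E A then 1 else 0)) = R * adj_weight n P A + c * (if E A then adj_weight n P A else 0)"
      by (simp add: algebra_simps)
    then show ?thesis by (simp add: sum.distrib sum_distrib_left)
  qed
  also have "(\<Sum>A\<in>adj_set n. if E A then adj_weight n P A else 0) = net_prob n P E"
    unfolding net_prob_def by (simp add: sum.inter_filter)
  finally show ?thesis using total_weight[OF P01] by simp
qed

lemma frob_expand: "frob2 n A X = frob2 n A P + frob2 n X P - 2 * ipW n P A (\<lambda>i j. X i j - P i j)"
  unfolding frob2_def ipW_def
  by (simp add: sum_subtractf[symmetric] sum.distrib[symmetric] sum_distrib_left power2_eq_square algebra_simps)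

lemma ipW_neg: "ipW n P A (\<lambda>i j. P i j - X i j) = - ipW n P A (\<lambda>i j. X i j - P i j)"
  unfolding ipW_def by (simp add: sum_negf[symmetric] algebra_simps)

lemma ipW_split: "ipW n P A (\<lambda>i j. X i j - P i j) = ipW n P A (\<lambda>i j. M i j - P i j) + ipW n P A (\<lambda>i j. X i j - M i j)"
  unfolding ipW_def by (simp add: sum.distrib[symmetric] algebra_simps)

lemma ipW_small: assumes A: "A \<in> adj_set n" and P01: "\<forall>i<n. \<forall>j<n. 0 \<le> P i j \<and> P i j \<le> 1"
  and D: "\<forall>i<n. \<forall>j<n. \<bar>D i j\<bar> \<le> d"
  shows "\<bar>ipW n P A D\<bar> \<le> real n ^ 2 * d"
proof -
  have "\<bar>ipW n P A D\<bar> \<le> (\<Sum>i<n. \<Sum>j<n. \<bar>(A i j - P i j) * D i j\<bar>)"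
    unfolding ipW_def by (rule order.trans[OF sum_abs]) (intro sum_mono sum_abs)
  also have "\<dots> \<le> (\<Sum>i<n. \<Sum>j<n. d)"
  proof (intro sum_mono)
    fix i j assume "i \<in> {..<n}" "j \<in> {..<n}"
    then have a: "A i j = 0 \<or> A i j = 1" and p: "0 \<le> P i j" "P i j \<le> 1" and dd: "\<bar>D i j\<bar> \<le> d"
      using A P01 D unfolding adj_set_def by auto
    from a p have "\<bar>A i j - P i j\<bar> \<le> 1" by auto
    note this dd
    then show "\<bar>(A i j - P i j) * D i j\<bar> \<le> d" unfolding abs_mult
      using mult_mono[of "\<bar>A i j - P i j\<bar>" 1 "\<bar>D i j\<bar>" d] by simp
  qed
  also have "\<dots> = real n ^ 2 * d" by (simp add: power2_eq_square)
  finally show ?thesis .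
qed

lemma nrm_tri: fixes M X P :: "nat \<Rightarrow> nat \<Rightarrow> real" shows "(\<Sum>i<n. \<Sum>j<n. (M i j - P i j)^2) \<le> 2 * (\<Sum>i<n. \<Sum>j<n. (X i j - P i j)^2) + 2 * (\<Sum>i<n. \<Sum>j<n. (M i j - X i j)^2)"
proof -
  have "(\<Sum>i<n. \<Sum>j<n. (M i j - P i j)^2) \<le> (\<Sum>i<n. \<Sum>j<n. 2 * (X i j - P i j)^2 + 2 * (M i j - X i j)^2)"
  proof (intro sum_mono)
    fix i j
    have "0 \<le> ((X i j - P i j) - (M i j - X i j))^2" by simp
    then show "(M i j - P i j)^2 \<le> 2 * (X i j - P i j)^2 + 2 * (M i j - X i j)^2"
      by (simp add: power2_eq_square algebra_simps)
  qed
  also have "\<dots> = 2 * (\<Sum>i<n. \<Sum>j<n. (X i j - P i j)^2) + 2 * (\<Sum>i<n. \<Sum>j<n. (M i j - X i j)^2)"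
    by (simp add: sum.distrib sum_distrib_left)
  finally show ?thesis .
qed

lemma ln2_half: "1/2 \<le> ln (2::real)"
proof -
  have "exp (1/2::real) \<le> 1 + 1/2 + (1/2)^2" by (rule exp_bound) auto
  then have "exp (1/2::real) \<le> 2" by (simp add: power2_eq_square)
  then show ?thesis by (metis ln_exp ln_le_cancel_iff exp_gt_zero zero_less_numeral)
qed


lemma pen_lb: assumes "2 \<le> n" "1 \<le> L" "1 \<le> K"
  shows "1000 * ((real n * real L + real K ^ 2) * ln (real n)) \<le> Pen 1000 1 n K L"
    "(real n + 1) / 2 \<le> (real n * real L + real K ^ 2) * ln (real n)"
    "ln (real n) \<le> (real n * real L + real K ^ 2) * ln (real n)"
    "0 \<le> ln (real n)"
proof -
  have l2: "1/2 \<le> ln (real n)"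
  proof -
    have "ln 2 \<le> ln (real n)" using assms by simp
    then show ?thesis using ln2_half by linarith
  qed
  have a: "real n + 1 \<le> real n * real L + real K ^ 2"
  proof -
    have "real n * 1 \<le> real n * real L" using assms by (intro mult_left_mono) auto
    moreover have "1 \<le> real K ^ 2" using assms by simp
    ultimately show ?thesis by linarith
  qed
  show "0 \<le> ln (real n)" using l2 by linarith
  show "(real n + 1) / 2 \<le> (real n * real L + real K ^ 2) * ln (real n)"
    using mult_mono[OF a l2] by simp
  show "ln (real n) \<le> (real n * real L + real K ^ 2) * ln (real n)"
    using mult_right_mono[of 1 "real n * real L + real K ^ 2" "ln (real n)"] a l2 by simp
  have "0 \<le> real n * ln (real K)" using assms by simp
  then show "1000 * ((real n * real L + real K ^ 2) * ln (real n)) \<le> Pen 1000 1 n K L"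
    unfolding Pen_def by (simp add: algebra_simps)
qed

lemma NBM_01: "Q \<in> NBM n K L \<Longrightarrow> \<forall>i<n. \<forall>j<n. 0 \<le> Q i j \<and> Q i j \<le> 1"
  unfolding NBM_def nbm_rep_def by auto

lemma frob_le: assumes "\<forall>i<n. \<forall>j<n. 0 \<le> Q i j \<and> Q i j \<le> 1" "\<forall>i<n. \<forall>j<n. 0 \<le> P i j \<and> P i j \<le> 1"
  shows "frob2 n Q P \<le> real n ^ 2" "0 \<le> frob2 n Q P"
proof -
  have "frob2 n Q P \<le> (\<Sum>i<n. \<Sum>j<n. 1)" unfolding frob2_def
  proof (intro sum_mono)
    fix i j assume "i \<in> {..<n}" "j \<in> {..<n}"
    then have "0 \<le> Q i j" "Q i j \<le> 1" "0 \<le> P i j" "P i j \<le> 1" using assms by auto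
    then have "\<bar>Q i j - P i j\<bar> \<le> 1" by (simp add: abs_le_iff)
    then have "\<bar>Q i j - P i j\<bar> * \<bar>Q i j - P i j\<bar> \<le> 1 * 1" by (intro mult_mono) auto
    then show "(Q i j - P i j)^2 \<le> 1" by (simp add: power2_eq_square abs_mult[symmetric])
  qed
  then show "frob2 n Q P \<le> real n ^ 2" by (simp add: power2_eq_square)
  show "0 \<le> frob2 n Q P" unfolding frob2_def by (intro sum_nonneg) auto
qed


lemma arith_aux: fixes n t p l :: real
  assumes "2 \<le> n" "1000 * t \<le> p" "(n + 1) / 2 \<le> t" "l \<le> t" "0 \<le> l"
  shows "2 * (256 * t + 64 * l + n) + 7 \<le> p"
proof -
  have a: "n \<le> 2 * t - 1" using assms(3) by simp
  have b: "t \<ge> 3/2" using assms(1,3) by simp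
  show ?thesis using assms a b by simp
qed

lemma arith_aux2: fixes n t p :: real
  assumes "0 < n" "1000 * t \<le> p" "(n + 1) / 2 \<le> t"
  shows "2 * n \<le> p"
proof -
  have a: "n \<le> 2 * t - 1" using assms(3) by simp
  show ?thesis using assms a by simp
qed

lemma arith_aux3: fixes a fh f ph pe ipM ipE ip2 nm s x n :: real
  assumes "a + fh - 2 * (ipM + ipE) + ph \<le> a + f + 2 * ip2 + pe"
    "ipE \<le> 3" "nm \<le> 2 * fh + 2 * s" "s \<le> 9/4" "ipM < nm / 16 + x" "ip2 < f / 16 + n"
    "2 * x + 7 \<le> ph" "2 * n \<le> pe" "0 \<le> f" "0 \<le> n"
  shows "fh \<le> 3 * (f + pe)"
proof -
  have 0: "fh \<le> f + 2 * ip2 + pe - ph + 2 * ipM + 2 * ipE" using assms(1) by simp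
  have 1: "2 * ipM \<le> fh / 4 + 9/16 + 2 * x" using assms(3-5) by simp
  have 2: "2 * ip2 \<le> f / 8 + 2 * n" using assms(6) by simp
  have 3: "fh \<le> f + f/8 + 2 * n + pe + fh / 4 + 9/16 + 6 - 7" using 0 1 2 assms(2,7) by simp
  then have "3 * fh \<le> 9 * f / 2 + 8 * n + 4 * pe" by simp
  then show ?thesis using assms(8-10) by simp
qed

lemma main_bound:
  fixes Pstar P :: "nat \<Rightarrow> nat \<Rightarrow> real"
  assumes n: "2 \<le> n" and P01: "\<forall>i<n. \<forall>j<n. 0 \<le> Pstar i j \<and> Pstar i j \<le> 1"
    and sym: "\<forall>i j. Pstar i j = Pstar j i" and lse: "is_pen_lse 1000 1 n est"
    and KL: "1 \<le> L" "L \<le> K" "K \<le> n" and PN: "P \<in> NBM n K L"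
  shows "net_prob n Pstar (\<lambda>A. frob2 n (snd (snd (est A))) Pstar
              \<le> 3 * (frob2 n P Pstar + Pen 1000 1 n K L))
           \<ge> 1 - (real n ^ 2 * log 2 (real n) + 1) * exp (- real n / 32)
         \<and>
         net_expect n Pstar (\<lambda>A. frob2 n (snd (snd (est A))) Pstar)
           \<le> 3 * (frob2 n P Pstar + Pen 1000 1 n K L) + real n ^ 5 * exp (- real n / 32)"
proof -
  define Dn where "Dn = (\<lambda>X i j. X i j - Pstar i j)"
  define Nrm where "Nrm = (\<lambda>D. (\<Sum>i<n. \<Sum>j<n. ((D i j)::real)^2))"
  define T where "T = (\<lambda>K' L'. (real n * real L' + real K' ^ 2) * ln (real n))"
  define xx where "xx = (\<lambda>K' L'. 256 * T K' L' + 64 * ln (real n) + real n)"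
  define R where "R = 3 * (frob2 n P Pstar + Pen 1000 1 n K L)"
  define bad1 where "bad1 = (\<lambda>k A. \<exists>M\<in>NetS n (fst k) (snd k). Nrm (Dn M) / 16 + xx (fst k) (snd k) \<le> ipW n Pstar A (Dn M))"
  define bad2 where "bad2 = (\<lambda>A. Nrm (\<lambda>i j. Pstar i j - P i j) / 16 + real n \<le> ipW n Pstar A (\<lambda>i j. Pstar i j - P i j))"
  define I where "I = {1..n} \<times> {1..n}"
  define bad where "bad = (\<lambda>A. (\<exists>k\<in>I. bad1 k A) \<or> bad2 A)"
  define e where "e = exp (- real n / 32)"
  have P01P: "\<forall>i<n. \<forall>j<n. 0 \<le> P i j \<and> P i j \<le> 1" using NBM_01[OF PN] .
  have npos: "0 < real n" using n by simp
  have pb1: "net_prob n Pstar (bad1 k) \<le> e / real n ^ 2" if k: "k \<in> I" for k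
  proof -
    obtain K' L' where kk: "k = (K', L')" "1 \<le> K'" "K' \<le> n" "1 \<le> L'" "L' \<le> n" using k unfolding I_def by auto
    have "net_prob n Pstar (bad1 k) \<le> (\<Sum>M\<in>NetS n K' L'. net_prob n Pstar (\<lambda>A. Nrm (Dn M) / 16 + xx K' L' \<le> ipW n Pstar A (Dn M)))"
      unfolding bad1_def kk fst_conv snd_conv by (rule prob_ex[OF P01 finite_NetS])
    also have "\<dots> \<le> (\<Sum>M\<in>NetS n K' L'. exp (- xx K' L' / 32))"
    proof (rule sum_mono)
      fix M assume M: "M \<in> NetS n K' L'"
      have "\<forall>i<n. \<forall>j<n. \<bar>Dn M i j\<bar> \<le> 1"
      proof (intro allI impI)
        fix i j assume "i < n" "j < n"
        then have "0 \<le> M i j" "M i j \<le> 1" "0 \<le> Pstar i j" "Pstar i j \<le> 1" using M P01 unfolding NetS_def by auto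
        then show "\<bar>Dn M i j\<bar> \<le> 1" unfolding Dn_def by (simp add: abs_le_iff)
      qed
      from tail[OF P01 sym this, of "xx K' L'"]
      show "net_prob n Pstar (\<lambda>A. Nrm (Dn M) / 16 + xx K' L' \<le> ipW n Pstar A (Dn M)) \<le> exp (- xx K' L' / 32)"
        unfolding Nrm_def .
    qed
    also have "\<dots> = real (card (NetS n K' L')) * exp (- xx K' L' / 32)" by simp
    also have "\<dots> \<le> exp (8 * T K' L') * exp (- xx K' L' / 32)"
    proof (rule mult_right_mono)
      have "real (card (NetS n K' L')) \<le> exp (8 * (real n * real L' + real K' ^ 2) * ln (real n))"
        using card_NetS[of n L' K'] n kk by auto
      then show "real (card (NetS n K' L')) \<le> exp (8 * T K' L')" unfolding T_def by (simp only: mult.assoc)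
    qed simp
    also have "\<dots> = e * exp (- (2 * ln (real n)))"
    proof -
      have "8 * T K' L' + (- xx K' L' / 32) = (- real n / 32) + (- (2 * ln (real n)))"
        unfolding xx_def by (simp add: field_simps)
      then show ?thesis unfolding e_def mult_exp_exp by simp
    qed
    also have "exp (- (2 * ln (real n))) = 1 / real n ^ 2"
    proof -
      have "exp (2 * ln (real n)) = real n ^ 2"
        using exp_of_nat_mult[of 2 "ln (real n)"] npos by simp
      then show ?thesis by (simp add: exp_minus field_simps)
    qed
    finally show ?thesis by simp
  qed
  have pbad1: "net_prob n Pstar (\<lambda>A. \<exists>k\<in>I. bad1 k A) \<le> e"
  proof -
    have "net_prob n Pstar (\<lambda>A. \<exists>k\<in>I. bad1 k A) \<le> (\<Sum>k\<in>I. net_prob n Pstar (bad1 k))"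
      by (rule prob_ex[OF P01]) (simp add: I_def)
    also have "\<dots> \<le> (\<Sum>k\<in>I. e / real n ^ 2)" by (intro sum_mono pb1)
    also have "\<dots> = e" unfolding I_def using npos by (simp add: power2_eq_square)
    finally show ?thesis .
  qed
  have pbad2: "net_prob n Pstar bad2 \<le> e"
  proof -
    have "\<forall>i<n. \<forall>j<n. \<bar>Pstar i j - P i j\<bar> \<le> 1"
    proof (intro allI impI)
      fix i j assume "i < n" "j < n"
      then have "0 \<le> P i j" "P i j \<le> 1" "0 \<le> Pstar i j" "Pstar i j \<le> 1" using P01P P01 by auto
      then show "\<bar>Pstar i j - P i j\<bar> \<le> 1" by (simp add: abs_le_iff)
    qed
    from tail[OF P01 sym this, of "real n"] show ?thesis unfolding bad2_def Nrm_def e_def .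
  qed
  have pbad: "net_prob n Pstar bad \<le> 2 * e"
    using prob_or[OF P01, of "\<lambda>A. \<exists>k\<in>I. bad1 k A" bad2] pbad1 pbad2 unfolding bad_def by simp
  have det: "frob2 n (snd (snd (est A))) Pstar \<le> R" if A: "A \<in> adj_set n" and nb: "\<not> bad A" for A
  proof -
    obtain Kh Lh Ph where est: "est A = (Kh, Lh, Ph)" by (cases "est A") auto
    have h: "1 \<le> Lh" "Lh \<le> Kh" "Kh \<le> n" "Ph \<in> NBM n Kh Lh"
      and ineq: "frob2 n A Ph + Pen 1000 1 n Kh Lh \<le> frob2 n A P + Pen 1000 1 n K L"
      using lse A KL PN unfolding is_pen_lse_def est by (auto simp: est)
    obtain M where M: "M \<in> NetS n Kh Lh" and Mc: "\<forall>i<n. \<forall>j<n. \<bar>M i j - Ph i j\<bar> \<le> 3 / real n ^ 2"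
      using approx_net[OF n h(4)] by blast
    have kI: "(Kh, Lh) \<in> I" using h unfolding I_def by auto
    have nb1: "ipW n Pstar A (Dn M) < Nrm (Dn M) / 16 + xx Kh Lh"
      using nb kI M unfolding bad_def bad1_def by force
    have nb2: "ipW n Pstar A (\<lambda>i j. Pstar i j - P i j) < Nrm (\<lambda>i j. Pstar i j - P i j) / 16 + real n"
      using nb unfolding bad_def bad2_def by force
    have NF: "Nrm (\<lambda>i j. Pstar i j - P i j) = frob2 n P Pstar"
      unfolding Nrm_def frob2_def by (intro sum.cong refl) (simp add: power2_commute)
    define Fh where "Fh = frob2 n Ph Pstar"
    define F where "F = frob2 n P Pstar"
    have e1: "frob2 n A Ph = frob2 n A Pstar + Fh - 2 * ipW n Pstar A (Dn Ph)"
      unfolding Fh_def Dn_def by (rule frob_expand)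
    have e2: "frob2 n A P = frob2 n A Pstar + F + 2 * ipW n Pstar A (\<lambda>i j. Pstar i j - P i j)"
      unfolding F_def ipW_neg using frob_expand[of n A P Pstar] by simp
    have e3: "ipW n Pstar A (Dn Ph) = ipW n Pstar A (Dn M) + ipW n Pstar A (\<lambda>i j. Ph i j - M i j)"
      unfolding Dn_def by (rule ipW_split)
    have e4: "\<bar>ipW n Pstar A (\<lambda>i j. Ph i j - M i j)\<bar> \<le> real n ^ 2 * (3 / real n ^ 2)"
      by (rule ipW_small[OF A P01]) (use Mc in \<open>auto simp: abs_minus_commute\<close>)
    have e4': "real n ^ 2 * (3 / real n ^ 2) = 3" using npos by simp
    have sq: "(\<Sum>i<n. \<Sum>j<n. (M i j - Ph i j)^2) \<le> 9/4"
    proof -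
      have "(\<Sum>i<n. \<Sum>j<n. (M i j - Ph i j)^2) \<le> (\<Sum>i<n. \<Sum>j<n. (3 / real n ^ 2)^2)"
      proof (intro sum_mono)
        fix i j assume "i \<in> {..<n}" "j \<in> {..<n}"
        then have "\<bar>M i j - Ph i j\<bar> \<le> 3 / real n ^ 2" using Mc by auto
        then have "\<bar>M i j - Ph i j\<bar> * \<bar>M i j - Ph i j\<bar> \<le> (3 / real n ^ 2) * (3 / real n ^ 2)"
          by (intro mult_mono) auto
        then show "(M i j - Ph i j)^2 \<le> (3 / real n ^ 2)^2" by (simp add: power2_eq_square abs_mult[symmetric])
      qed
      also have "\<dots> = 9 / real n ^ 2" using npos by (simp add: power2_eq_square field_simps)
      also have "\<dots> \<le> 9 / 4"
      proof -
        have "2 * 2 \<le> real n * real n" using n by (intro mult_mono) auto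
        then have "4 \<le> real n ^ 2" by (simp add: power2_eq_square)
        then show ?thesis using n by (intro divide_left_mono) auto
      qed
      finally show ?thesis .
    qed
    have e5: "Nrm (Dn M) \<le> 2 * Fh + 2 * (\<Sum>i<n. \<Sum>j<n. (M i j - Ph i j)^2)"
      unfolding Nrm_def Dn_def Fh_def frob2_def by (rule nrm_tri)
    note plb = pen_lb[OF n h(1) order.trans[OF h(1) h(2)]]
    note plb2 = pen_lb[OF n KL(1) order.trans[OF KL(1) KL(2)]]
    have penh: "2 * xx Kh Lh + 7 \<le> Pen 1000 1 n Kh Lh"
    proof -
      have Teq: "(real n * real Lh + real Kh ^ 2) * ln (real n) = T Kh Lh" by (simp add: T_def)
      have xe: "xx Kh Lh = 256 * T Kh Lh + 64 * ln (real n) + real n" by (simp add: xx_def)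
      note q = plb[unfolded Teq]
      have "2 \<le> real n" using n by simp
      then show ?thesis unfolding xe using arith_aux q(1-4) by blast
    qed
    have pen: "2 * real n \<le> Pen 1000 1 n K L"
    proof -
      have Teq: "(real n * real L + real K ^ 2) * ln (real n) = T K L" by (simp add: T_def)
      note q = plb2[unfolded Teq]
      show ?thesis using arith_aux2[OF npos q(1) q(2)] .
    qed
    have "Fh \<le> R"
      unfolding R_def F_def[symmetric]
    proof -
      have e4a: "ipW n Pstar A (\<lambda>i j. Ph i j - M i j) \<le> 3" using e4 e4' by (simp add: abs_le_iff)
      have nb2': "ipW n Pstar A (\<lambda>i j. Pstar i j - P i j) < F / 16 + real n" using nb2 NF unfolding F_def by simp
      have h1: "frob2 n A Pstar + Fh - 2 * (ipW n Pstar A (Dn M) + ipW n Pstar A (\<lambda>i j. Ph i j - M i j)) + Pen 1000 1 n Kh Lh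
           \<le> frob2 n A Pstar + F + 2 * ipW n Pstar A (\<lambda>i j. Pstar i j - P i j) + Pen 1000 1 n K L"
          using ineq e1 e2 e3 by simp
      have F0: "0 \<le> F" unfolding F_def using frob_le(2)[OF P01P P01] .
      have n0: "0 \<le> real n" by simp
      show "Fh \<le> 3 * (F + Pen 1000 1 n K L)" by (rule arith_aux3[OF h1 e4a e5 sq nb1 nb2' penh pen F0 n0])
    qed
    then show ?thesis unfolding est Fh_def by simp
  qed
  have Rnn: "0 \<le> R"
  proof -
    note q = pen_lb[OF n KL(1) order.trans[OF KL(1) KL(2)]]
    define X where "X = (real n * real L + real K ^ 2) * ln (real n)"
    have "0 \<le> X" using q(3,4) unfolding X_def by linarith
    then have "0 \<le> Pen 1000 1 n K L" using q(1) unfolding X_def[symmetric] by linarith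
    then show ?thesis unfolding R_def using frob_le(2)[OF P01P P01] by simp
  qed
  have fb: "frob2 n (snd (snd (est A))) Pstar \<le> real n ^ 2" if A: "A \<in> adj_set n" for A
  proof -
    obtain Kh Lh Ph where est: "est A = (Kh, Lh, Ph)" by (cases "est A") auto
    have "Ph \<in> NBM n Kh Lh" using lse A unfolding is_pen_lse_def by (auto simp: est)
    from frob_le(1)[OF NBM_01[OF this] P01] show ?thesis by (simp add: est)
  qed
  have log1: "1 \<le> log 2 (real n)" using n by simp
  have n2: "4 \<le> real n ^ 2"
  proof -
    have "2 * 2 \<le> real n * real n" using n by (intro mult_mono) auto
    then show ?thesis by (simp add: power2_eq_square)
  qed
  have epos: "0 \<le> e" unfolding e_def by simp
  have "net_prob n Pstar (\<lambda>A. \<not> bad A) \<le> net_prob n Pstar (\<lambda>A. frob2 n (snd (snd (est A))) Pstar \<le> R)"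
    by (rule prob_mono[OF P01]) (auto intro: det)
  moreover have "net_prob n Pstar (\<lambda>A. \<not> bad A) = 1 - net_prob n Pstar bad" by (rule prob_compl[OF P01])
  moreover have "2 * e \<le> (real n ^ 2 * log 2 (real n) + 1) * e"
  proof -
    have "4 * 1 \<le> real n ^ 2 * log 2 (real n)" using n2 log1 by (intro mult_mono) auto
    then show ?thesis using epos by (intro mult_right_mono) auto
  qed
  ultimately have prob: "net_prob n Pstar (\<lambda>A. frob2 n (snd (snd (est A))) Pstar \<le> R)
      \<ge> 1 - (real n ^ 2 * log 2 (real n) + 1) * e" using pbad by linarith
  have "net_expect n Pstar (\<lambda>A. frob2 n (snd (snd (est A))) Pstar) \<le> R + real n ^ 2 * net_prob n Pstar bad"
  proof (rule expect_bound[OF P01], intro ballI)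
    fix A assume A: "A \<in> adj_set n"
    show "frob2 n (snd (snd (est A))) Pstar \<le> R + real n ^ 2 * (if bad A then 1 else 0)"
      using det[OF A] fb[OF A] Rnn by (cases "bad A") auto
  qed
  also have "\<dots> \<le> R + real n ^ 2 * (2 * e)" using pbad by (intro add_left_mono mult_left_mono) auto
  also have "\<dots> \<le> R + real n ^ 5 * e"
  proof -
    have "real n ^ 2 * 2 \<le> real n ^ 2 * real n ^ 3"
    proof (intro mult_left_mono)
      have "(2::real) \<le> 2 ^ 3" by simp
      also have "\<dots> \<le> real n ^ 3" using n by (intro power_mono) auto
      finally show "2 \<le> real n ^ 3" .
    qed auto
    then have "real n ^ 2 * 2 \<le> real n ^ 5" by (simp add: power_add[symmetric])
    then show ?thesis using epos by (simp add: mult.assoc[symmetric] mult_right_mono)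
  qed
  finally show ?thesis using prob unfolding R_def e_def by simp
qed


theorem theorem1:
  "\<exists>C1 C2 :: real. 0 < C1 \<and> 0 < C2 \<and>
    (\<forall>(n::nat) Ks Ls Pstar est.
      2 \<le> n \<longrightarrow> 1 \<le> Ls \<longrightarrow> Ls \<le> Ks \<longrightarrow> Ks \<le> n \<longrightarrow>
      (\<exists>z c B H lambda0. nbm_rep n Ks Ls z c B H Pstar \<and>
          (\<forall>i j. Pstar i j = Pstar j i) \<and>
          assumption_A1 Ks B lambda0 \<and> assumption_A2 n Ks Ls z H) \<longrightarrow>
      is_pen_lse C1 C2 n est \<longrightarrow>
      (\<forall>K L P. 1 \<le> L \<longrightarrow> L \<le> K \<longrightarrow> K \<le> n \<longrightarrow> P \<in> NBM n K L \<longrightarrow>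
         net_prob n Pstar (\<lambda>A. frob2 n (snd (snd (est A))) Pstar
              \<le> 3 * (frob2 n P Pstar + Pen C1 C2 n K L))
           \<ge> 1 - (real n ^ 2 * log 2 (real n) + 1) * exp (- real n / 32)
         \<and>
         net_expect n Pstar (\<lambda>A. frob2 n (snd (snd (est A))) Pstar)
           \<le> 3 * (frob2 n P Pstar + Pen C1 C2 n K L) + real n ^ 5 * exp (- real n / 32)))"
  proof -
  have main: "\<forall>(n::nat) Ks Ls Pstar est.
      2 \<le> n \<longrightarrow> 1 \<le> Ls \<longrightarrow> Ls \<le> Ks \<longrightarrow> Ks \<le> n \<longrightarrow>
      (\<exists>z c B H lambda0. nbm_rep n Ks Ls z c B H Pstar \<and>
          (\<forall>i j. Pstar i j = Pstar j i) \<and>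
          assumption_A1 Ks B lambda0 \<and> assumption_A2 n Ks Ls z H) \<longrightarrow>
      is_pen_lse 1000 1 n est \<longrightarrow>
      (\<forall>K L P. 1 \<le> L \<longrightarrow> L \<le> K \<longrightarrow> K \<le> n \<longrightarrow> P \<in> NBM n K L \<longrightarrow>
         net_prob n Pstar (\<lambda>A. frob2 n (snd (snd (est A))) Pstar
              \<le> 3 * (frob2 n P Pstar + Pen 1000 1 n K L))
           \<ge> 1 - (real n ^ 2 * log 2 (real n) + 1) * exp (- real n / 32)
         \<and>
         net_expect n Pstar (\<lambda>A. frob2 n (snd (snd (est A))) Pstar)
           \<le> 3 * (frob2 n P Pstar + Pen 1000 1 n K L) + real n ^ 5 * exp (- real n / 32))"
  proof (intro allI impI)
    fix n Ks Ls Pstar est K L P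
    assume n: "2 \<le> (n::nat)" and ex: "\<exists>z c B H lambda0. nbm_rep n Ks Ls z c B H Pstar \<and>
          (\<forall>i j. Pstar i j = Pstar j i) \<and> assumption_A1 Ks B lambda0 \<and> assumption_A2 n Ks Ls z H"
      and lse: "is_pen_lse 1000 1 n est" and KL: "1 \<le> L" "L \<le> K" "K \<le> n" and PN: "P \<in> NBM n K L"
    from ex obtain z c B H lambda0 where h: "nbm_rep n Ks Ls z c B H Pstar \<and>
          (\<forall>i j. Pstar i j = Pstar j i) \<and> assumption_A1 Ks B lambda0 \<and> assumption_A2 n Ks Ls z H"
      by (elim exE) (erule that)
    have rep: "nbm_rep n Ks Ls z c B H Pstar" using h by (rule conjunct1)
    have sym: "\<forall>i j. Pstar i j = Pstar j i" using conjunct2[OF h] by (rule conjunct1)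
    have P01: "\<forall>i<n. \<forall>j<n. 0 \<le> Pstar i j \<and> Pstar i j \<le> 1" using rep unfolding nbm_rep_def by (rule conjunct1)
    show "net_prob n Pstar (\<lambda>A. frob2 n (snd (snd (est A))) Pstar
              \<le> 3 * (frob2 n P Pstar + Pen 1000 1 n K L))
           \<ge> 1 - (real n ^ 2 * log 2 (real n) + 1) * exp (- real n / 32)
         \<and>
         net_expect n Pstar (\<lambda>A. frob2 n (snd (snd (est A))) Pstar)
           \<le> 3 * (frob2 n P Pstar + Pen 1000 1 n K L) + real n ^ 5 * exp (- real n / 32)"
      by (rule main_bound[OF n P01 sym lse KL PN])
  qed
  have c: "(0::real) < 1000" "(0::real) < 1" by simp_all
  show ?thesis
    apply (rule exI[of _ "1000::real"])
    apply (rule exI[of _ "1::real"])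
    apply (rule conjI[OF c(1)])
    apply (rule conjI[OF c(2)])
    apply (rule main)
    done
qed

end
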